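(* Assume Assumptions 1, 2 and 3 (see context) hold, let $T\ge 1$ and let $(\eta_t)_{t\ge1}$ be a non-increasing sequence of positive step sizes used by SMD. Fix $\delta\in(0,1)$. Let $Y_1,Y_2$ be positive numbers (which may depend on $\delta$ and on $(\eta_t)_{t=1}^T$) such that, with $$\gamma=\sqrt{Y_2+\sum_{t=1}^T\eta_t^2\,(G^2+\sigma^2)}$$ and $$D_t=\max\Big\{\gamma,\sqrt{B_\psi(x^*,x_1)},\dots,\sqrt{B_\psi(x^*,x_t)}\Big\},\qquad t\ge1,$$ it holds that $$P\Big(\max_{s\le T}\sum_{t=1}^s\eta_t\Big\langle \xi_t,\frac{x_t-x^*}{\sqrt2\,D_t}\Big\rangle>Y_1\Big)\le\frac\delta2\quad\text{and}\quad P\Big(\sum_{t=1}^T\eta_t^2\big(\|\xi_t\|_*^2-\mathbb E_t\|\xi_t\|_*^2\big)>Y_2\Big)\le\frac\delta2 .$$ Then, with probability at least $1-\delta$, the average iterate $\bar x_T=\frac1T\sum_{t=1}^Tx_t$ satisfies $$f(\bar x_T)-f^*\le\frac{3}{\eta_T T}\Big(B_\psi(x^*,x_1)+\sum_{t=1}^T\eta_t^2(G^2+\sigma^2)+2Y_1^2+Y_2\Big).$$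
   Context: Let $\|\cdot\|$ be a norm on $\mathbb R^d$ with dual norm $\|y\|_*=\sup_{\|w\|\le1}\langle y,w\rangle$. Let $\mathcal X\subseteq\mathbb R^d$ be nonempty, closed and convex, and $f:\mathcal X\to\mathbb R$ convex with a minimizer $x^*\in\mathcal X$, $f^*=f(x^* )$; $\partial f(x)$ is the subdifferential. Assumption 1: the regularizer $\psi:\mathbb R^d\to(-\infty,+\infty]$ is closed, convex, differentiable on $\mathrm{int}(\mathrm{dom}\,\psi)\neq\emptyset$ (where $\mathrm{dom}\,\psi=\{\psi<\infty\}$), $1$-strongly convex w.r.t. $\|\cdot\|$ (i.e. $\psi(x)\ge\psi(y)+\langle x-y,g\rangle+\frac12\|x-y\|^2$ for $x,y\in\mathrm{dom}\,\psi$, $g\in\partial\psi(y)$), $\mathcal X\subseteq\mathrm{dom}\,\psi$, and either $\|\nabla\psi(y_k)\|_2\to\infty$ for every sequence $(y_k)$ in $\mathrm{int}\,\mathrm{dom}\,\psi$ converging to a boundary point of $\mathrm{dom}\,\psi$, or $\mathcal X\subseteq\mathrm{int}\,\mathrm{dom}\,\psi$. The Bregman divergence is $B_\psi(x,y)=\psi(x)-\psi(y)-\langle x-y,\nabla\psi(y)\rangle$. Stochastic Mirror Descent (SMD) with non-increasing positive step sizes $(\eta_t)$: pick $x_1\in\mathrm{int}\,\mathrm{dom}\,\psi$; at step $t$ the oracle returns $\hat g_t=g_t-\xi_t$ with $g_t\in\partial f(x_t)$ and noise $\xi_t\in\mathbb R^d$, and $x_{t+1}=\arg\min_{x\in\mathcal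 X}\langle\hat g_t,x\rangle+\eta_t^{-1}B_\psi(x,x_t)$. $\mathcal F_t$ is the $\sigma$-algebra generated by $\xi_1,\dots,\xi_t$ ($\mathcal F_0$ trivial), so $x_t$ and $g_t$ are $\mathcal F_{t-1}$-measurable; $\mathbb E_t[\cdot]=\mathbb E[\cdot\mid\mathcal F_{t-1}]$, and $\mathbb E_t[\xi_t]=0$. Assumption 2: $\|g\|_*\le G$ for all $x\in\mathcal X$, $g\in\partial f(x)$. Assumption 3: $\mathbb E_t\|\xi_t\|_*^2\le\sigma^2$ for all $t$. *)

theory Defs
  imports "HOL-Probability.Probability"
begin

definition is_norm :: "(real^'d \<Rightarrow> real) \<Rightarrow> bool" where
  "is_norm N \<longleftrightarrow> (\<forall>x. N x = 0 \<longrightarrow> x = 0) \<and> (\<forall>x y. N (x + y) \<le> N x + N y)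
                  \<and> (\<forall>c x. N (c *\<^sub>R x) = \<bar>c\<bar> * N x)"

definition dual_norm :: "(real^'d \<Rightarrow> real) \<Rightarrow> real^'d \<Rightarrow> real" where
  "dual_norm N y = Sup {y \<bullet> w | w. N w \<le> 1}"

definition subgrad :: "(real^'d) set \<Rightarrow> (real^'d \<Rightarrow> real) \<Rightarrow> real^'d \<Rightarrow> (real^'d) set" where
  "subgrad S h x = {g. \<forall>y\<in>S. h y \<ge> h x + g \<bullet> (y - x)}"

definition bregman :: "(real^'d \<Rightarrow> real) \<Rightarrow> (real^'d \<Rightarrow> real^'d) \<Rightarrow> real^'d \<Rightarrow> real^'d \<Rightarrow> real" where
  "bregman psi gpsi x y = psi x - psi y - (x - y) \<bullet> gpsi y"

definition gen_filt :: "'w measure \<Rightarrow> (nat \<Rightarrow> 'w \<Rightarrow> real^'d) \<Rightarrow> nat \<Rightarrow> 'w measure" where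
  "gen_filt M xi t = sigma (space M)
      (\<Union>s\<in>{1..t}. {xi s -` A \<inter> space M | A. A \<in> sets borel})"

definition Dseq :: "real \<Rightarrow> (real^'d \<Rightarrow> real) \<Rightarrow> (real^'d \<Rightarrow> real^'d) \<Rightarrow> real^'d
                   \<Rightarrow> (nat \<Rightarrow> 'w \<Rightarrow> real^'d) \<Rightarrow> nat \<Rightarrow> 'w \<Rightarrow> real" where
  "Dseq \<gamma> psi gpsi xs x t \<omega> = Max (insert \<gamma> ((\<lambda>s. sqrt (bregman psi gpsi xs (x s \<omega>))) ` {1..t}))"

end

theory Submission
  imports Defs
begin


lemma normN_basic:
  fixes N :: "real^'d \<Rightarrow> real"
  assumes "is_norm N"
  shows "N 0 = 0" "\<And>x. N x \<ge> 0" "\<And>x. N (- x) = N x" "\<And>x y. N (x + y) \<le> N x + N y"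
    "\<And>x. N x = 0 \<Longrightarrow> x = 0" "\<And>c x. N (c *\<^sub>R x) = \<bar>c\<bar> * N x"
proof -
  have h: "\<And>c x. N (c *\<^sub>R x) = \<bar>c\<bar> * N x" and t: "\<And>x y. N (x + y) \<le> N x + N y"
    using assms by (auto simp: is_norm_def)
  show "\<And>c x. N (c *\<^sub>R x) = \<bar>c\<bar> * N x" by (rule h)
  show "\<And>x y. N (x + y) \<le> N x + N y" by (rule t)
  show "\<And>x. N x = 0 \<Longrightarrow> x = 0" using assms by (auto simp: is_norm_def)
  show z: "N 0 = 0" using h[of 0 0] by simp
  show m: "\<And>x. N (- x) = N x" using h[of "-1"] by simp
  show "\<And>x. N x \<ge> 0"
  proof -
    fix x
    have "N 0 \<le> N x + N (- x)" using t[of x "-x"] by simp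
    then show "N x \<ge> 0" using z m[of x] by simp
  qed
qed

lemma normN_sum:
  fixes N :: "real^'d \<Rightarrow> real"
  assumes "is_norm N" "finite A"
  shows "N (\<Sum>i\<in>A. v i) \<le> (\<Sum>i\<in>A. N (v i))"
  using assms(2)
proof (induction A rule: finite_induct)
  case empty then show ?case using normN_basic[OF assms(1)] by simp
next
  case (insert a A)
  then show ?case using normN_basic(4)[OF assms(1), of "v a" "sum v A"] by simp
qed

lemma normN_upper:
  fixes N :: "real^'d \<Rightarrow> real"
  assumes "is_norm N"
  shows "\<exists>C\<ge>0. \<forall>x. N x \<le> C * norm x"
proof -
  define C where "C = (\<Sum>b\<in>Basis. N b)"
  have C0: "C \<ge> 0" unfolding C_def using normN_basic(2)[OF assms] by (simp add: sum_nonneg)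
  have "N x \<le> C * norm x" for x
  proof -
    have "N x = N (\<Sum>b\<in>Basis. (x \<bullet> b) *\<^sub>R b)" by (simp add: euclidean_representation)
    also have "\<dots> \<le> (\<Sum>b\<in>Basis. N ((x \<bullet> b) *\<^sub>R b))" by (rule normN_sum[OF assms]) simp
    also have "\<dots> = (\<Sum>b\<in>Basis. \<bar>x \<bullet> b\<bar> * N b)" using normN_basic(6)[OF assms] by simp
    also have "\<dots> \<le> (\<Sum>b\<in>Basis. norm x * N b)"
      by (rule sum_mono, rule mult_right_mono) (auto simp: Basis_le_norm normN_basic(2)[OF assms])
    also have "\<dots> = C * norm x" by (simp add: C_def sum_distrib_left mult.commute)
    finally show ?thesis .
  qed
  with C0 show ?thesis by blast
qed

lemma normN_cont:
  fixes N :: "real^'d \<Rightarrow> real"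
  assumes "is_norm N"
  shows "continuous_on UNIV N"
proof -
  obtain C where C: "C \<ge> 0" "\<And>x. N x \<le> C * norm x" using normN_upper[OF assms] by blast
  have lip: "\<bar>N x - N y\<bar> \<le> C * norm (x - y)" for x y
  proof -
    have "N x \<le> N y + N (x - y)" using normN_basic(4)[OF assms, of y "x - y"] by simp
    moreover have "N y \<le> N x + N (y - x)" using normN_basic(4)[OF assms, of x "y - x"] by simp
    moreover have "N (y - x) = N (x - y)" using normN_basic(3)[OF assms, of "x - y"] by simp
    ultimately show ?thesis using C(2)[of "x - y"] by linarith
  qed
  show ?thesis
  proof (rule continuous_at_imp_continuous_on, intro ballI)
    fix x :: "real^'d"
    show "isCont N x"
    proof (rule continuous_at_eps_delta[THEN iffD2], intro allI impI)
      fix e :: real assume e: "e > 0"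
      show "\<exists>d>0. \<forall>x'. dist x' x < d \<longrightarrow> dist (N x') (N x) < e"
      proof (intro exI[of _ "e / (C + 1)"] conjI allI impI)
        show "e / (C + 1) > 0" using e C by simp
        fix x' assume "dist x' x < e / (C + 1)"
        then have "(C + 1) * norm (x' - x) < e" using C by (simp add: dist_norm field_simps)
        moreover have "C * norm (x' - x) \<le> (C+1) * norm (x' - x)" by (simp add: mult_right_mono)
        ultimately show "dist (N x') (N x) < e" using lip[of x' x] by (simp add: dist_real_def)
      qed
    qed
  qed
qed

lemma normN_lower:
  fixes N :: "real^'d \<Rightarrow> real"
  assumes "is_norm N"
  shows "\<exists>c>0. \<forall>x. c * norm x \<le> N x"
proof -
  have cpt: "compact (sphere (0::real^'d) 1)" by simp
  have ne: "sphere (0::real^'d) 1 \<noteq> {}"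
  proof -
    obtain b :: "real^'d" where "b \<in> Basis" by (meson ex_in_conv nonempty_Basis)
    then show ?thesis by (auto intro!: exI[of _ b])
  qed
  obtain m where m: "m \<in> sphere 0 1" "\<And>y. y \<in> sphere 0 1 \<Longrightarrow> N m \<le> N y"
    using continuous_attains_inf[OF cpt ne continuous_on_subset[OF normN_cont[OF assms]]] by blast
  have pos: "N m > 0"
  proof -
    have "m \<noteq> 0" using m(1) by auto
    then have "N m \<noteq> 0" using normN_basic(5)[OF assms] by blast
    then show ?thesis using normN_basic(2)[OF assms, of m] by linarith
  qed
  have "N m * norm x \<le> N x" for x
  proof (cases "x = 0")
    case True then show ?thesis using normN_basic(1)[OF assms] by simp
  next
    case False
    then have "(1 / norm x) *\<^sub>R x \<in> sphere 0 1" by simp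
    then have "N m \<le> N ((1 / norm x) *\<^sub>R x)" by (rule m(2))
    also have "\<dots> = N x / norm x" using normN_basic(6)[OF assms] by simp
    finally show ?thesis using False by (simp add: field_simps)
  qed
  with pos show ?thesis by blast
qed



lemma dual_bdd:
  fixes N :: "real^'d \<Rightarrow> real"
  assumes "is_norm N"
  shows "bdd_above {y \<bullet> w | w. N w \<le> 1}"
proof -
  obtain c where c: "c > 0" "\<And>x. c * norm x \<le> N x" using normN_lower[OF assms] by blast
  have "y \<bullet> w \<le> norm y / c" if "N w \<le> 1" for w
  proof -
    have "c * norm w \<le> 1" using c(2)[of w] that by linarith
    then have "norm w \<le> 1 / c" using c(1) by (simp add: field_simps)
    then have "norm y * norm w \<le> norm y * (1 / c)" by (intro mult_left_mono) simp_all
    then have "norm y * norm w \<le> norm y / c" by simp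
    then show ?thesis using norm_cauchy_schwarz[of y w] by simp
  qed
  then show ?thesis by (auto intro!: bdd_aboveI[of _ "norm y / c"])
qed

lemma dual_holder:
  fixes N :: "real^'d \<Rightarrow> real"
  assumes "is_norm N"
  shows "y \<bullet> w \<le> dual_norm N y * N w" and "dual_norm N y \<ge> 0"
proof -
  have mem: "y \<bullet> v \<le> dual_norm N y" if "N v \<le> 1" for v
    unfolding dual_norm_def using that by (intro cSup_upper dual_bdd[OF assms]) auto
  show nn: "dual_norm N y \<ge> 0" using mem[of 0] normN_basic(1)[OF assms] by simp
  show "y \<bullet> w \<le> dual_norm N y * N w"
  proof (cases "N w = 0")
    case True then have "w = 0" using normN_basic(5)[OF assms] by simp
    then show ?thesis using True by simp
  next
    case False
    then have p: "N w > 0" using normN_basic(2)[OF assms, of w] by linarith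
    have "N ((1 / N w) *\<^sub>R w) = 1" using p normN_basic(6)[OF assms] by simp
    then have "y \<bullet> ((1 / N w) *\<^sub>R w) \<le> dual_norm N y" using mem by (metis order_refl)
    then show ?thesis using p by (simp add: field_simps)
  qed
qed

lemma dual_tri:
  fixes N :: "real^'d \<Rightarrow> real"
  assumes "is_norm N"
  shows "dual_norm N (a - b) \<le> dual_norm N a + dual_norm N b"
  unfolding dual_norm_def[of N "a - b"]
proof (rule cSup_least)
  show "{(a - b) \<bullet> w |w. N w \<le> 1} \<noteq> {}" using normN_basic(1)[OF assms] by (auto intro!: exI[of _ 0])
  fix z assume "z \<in> {(a - b) \<bullet> w |w. N w \<le> 1}"
  then obtain w where w: "z = (a - b) \<bullet> w" "N w \<le> 1" by auto
  have "a \<bullet> w \<le> dual_norm N a * N w" by (rule dual_holder[OF assms])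
  also have "\<dots> \<le> dual_norm N a" using w(2) dual_holder(2)[OF assms, of a] normN_basic(2)[OF assms, of w]
    by (simp add: mult_left_le)
  finally have 1: "a \<bullet> w \<le> dual_norm N a" .
  have "b \<bullet> (- w) \<le> dual_norm N b * N (- w)" by (rule dual_holder[OF assms])
  also have "\<dots> \<le> dual_norm N b" using w(2) dual_holder(2)[OF assms, of b] normN_basic(2,3)[OF assms, of w]
    by (simp add: mult_left_le)
  finally have 2: "b \<bullet> (- w) \<le> dual_norm N b" .
  show "z \<le> dual_norm N a + dual_norm N b" using 1 2 w(1) by (simp add: inner_diff_left)
qed

lemma grad_ineq:
  fixes psi :: "real^'d \<Rightarrow> real"
  assumes cv: "convex_on D psi" and y: "y \<in> interior D"
    and der: "(psi has_derivative (\<lambda>h. gy \<bullet> h)) (at y)" and u: "u \<in> D"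
  shows "psi u \<ge> psi y + gy \<bullet> (u - y)"
proof -
  define d where "d = u - y"
  have yD: "y \<in> D" using y interior_subset by blast
  have pd: "((\<lambda>s::real. y + s *\<^sub>R d) has_derivative (\<lambda>s. s *\<^sub>R d)) (at 0)"
    by (auto intro!: derivative_eq_intros)
  have der0: "((\<lambda>s::real. psi (y + s *\<^sub>R d)) has_derivative (\<lambda>s. gy \<bullet> (s *\<^sub>R d))) (at 0)"
    using has_derivative_compose[OF pd, of psi "\<lambda>h. gy \<bullet> h"] der by simp
  have "((\<lambda>s::real. psi (y + s *\<^sub>R d)) has_field_derivative (gy \<bullet> d)) (at 0)"
    proof -
    have "(\<lambda>s::real. gy \<bullet> (s *\<^sub>R d)) = (*) (gy \<bullet> d)" by (rule ext) simp
    then show ?thesis using der0 unfolding has_field_derivative_def by simp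
  qed
  then have lim: "((\<lambda>h. (psi (y + h *\<^sub>R d) - psi y) / h) \<longlongrightarrow> gy \<bullet> d) (at 0)"
    by (simp add: DERIV_def)
  then have lim': "((\<lambda>h. (psi (y + h *\<^sub>R d) - psi y) / h) \<longlongrightarrow> gy \<bullet> d) (at_right 0)"
    by (rule filterlim_mono) (simp_all add: at_le)
  have ev: "eventually (\<lambda>h. (psi (y + h *\<^sub>R d) - psi y) / h \<le> psi u - psi y) (at_right (0::real))"
  proof (rule eventually_at_rightI[of 0 1])
    show "(0::real) < 1" by simp
    fix h :: real assume "h \<in> {0<..<1}"
    then have h: "0 < h \<and> h < 1" by simp
    have "psi ((1 - h) *\<^sub>R y + h *\<^sub>R u) \<le> (1 - h) * psi y + h * psi u"
      using convex_onD[OF cv, of h y u] h yD u by simp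
    moreover have "(1 - h) *\<^sub>R y + h *\<^sub>R u = y + h *\<^sub>R d" by (simp add: d_def algebra_simps)
    ultimately have "psi (y + h *\<^sub>R d) - psi y \<le> h * (psi u - psi y)" by (simp add: algebra_simps)
    then show "(psi (y + h *\<^sub>R d) - psi y) / h \<le> psi u - psi y" using h by (simp add: field_simps)
  qed
  have "gy \<bullet> d \<le> psi u - psi y" by (rule tendsto_upperbound[OF lim' ev]) simp
  then show ?thesis by (simp add: d_def)
qed



lemma quot_lim:
  fixes psi :: "real^'d \<Rightarrow> real"
  assumes der: "(psi has_derivative (\<lambda>h. gy \<bullet> h)) (at y)"
  shows "((\<lambda>h. (psi (y + h *\<^sub>R d) - psi y) / h) \<longlongrightarrow> gy \<bullet> d) (at_right 0)"
proof -
  have pd: "((\<lambda>s::real. y + s *\<^sub>R d) has_derivative (\<lambda>s. s *\<^sub>R d)) (at 0)"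
    by (auto intro!: derivative_eq_intros)
  have der0: "((\<lambda>s::real. psi (y + s *\<^sub>R d)) has_derivative (\<lambda>s. gy \<bullet> (s *\<^sub>R d))) (at 0)"
    using has_derivative_compose[OF pd, of psi "\<lambda>h. gy \<bullet> h"] der by simp
  have "((\<lambda>s::real. psi (y + s *\<^sub>R d)) has_field_derivative (gy \<bullet> d)) (at 0)"
  proof -
    have "(\<lambda>s::real. gy \<bullet> (s *\<^sub>R d)) = (*) (gy \<bullet> d)" by (rule ext) simp
    then show ?thesis using der0 unfolding has_field_derivative_def by simp
  qed
  then have lim: "((\<lambda>h. (psi (y + h *\<^sub>R d) - psi y) / h) \<longlongrightarrow> gy \<bullet> d) (at 0)"
    by (simp add: DERIV_def)
  then show ?thesis
    by (rule filterlim_mono) (simp_all add: at_le)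
qed

lemma three_point_id:
  "bregman psi gpsi z y - bregman psi gpsi x' y - bregman psi gpsi z x'
     = (gpsi x' - gpsi y) \<bullet> (z - x')"
  unfolding bregman_def by (simp add: algebra_simps inner_diff_left inner_diff_right inner_commute)

lemma three_point:
  fixes psi :: "real^'d \<Rightarrow> real"
  assumes cv: "convex_on D psi" and X: "convex X" "X \<subseteq> D"
    and x': "x' \<in> X" and der: "(psi has_derivative (\<lambda>h. gpsi x' \<bullet> h)) (at x')"
    and eta: "eta > 0"
    and mn: "\<forall>z\<in>X. gh \<bullet> x' + bregman psi gpsi x' y / eta \<le> gh \<bullet> z + bregman psi gpsi z y / eta"
    and z: "z \<in> X"
  shows "eta * (gh \<bullet> (x' - z)) \<le> bregman psi gpsi z y - bregman psi gpsi z x' - bregman psi gpsi x' y"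
proof -
  define e where "e = z - x'"
  define L where "L = eta * (gh \<bullet> e) + (gpsi x' - gpsi y) \<bullet> e"
  have lb: "(psi (x' + h *\<^sub>R e) - psi x') / h - gpsi x' \<bullet> e \<ge> - L" if h: "0 < h" "h < 1" for h
  proof -
    define zh where "zh = x' + h *\<^sub>R e"
    have "zh = (1 - h) *\<^sub>R x' + h *\<^sub>R z" by (simp add: zh_def e_def algebra_simps)
    then have zhX: "zh \<in> X" using convexD[OF X(1) x' z, of "1 - h" h] h by simp
    have "gh \<bullet> x' + bregman psi gpsi x' y / eta \<le> gh \<bullet> zh + bregman psi gpsi zh y / eta"
      using mn zhX by blast
    then have "eta * (gh \<bullet> x' + bregman psi gpsi x' y / eta) \<le> eta * (gh \<bullet> zh + bregman psi gpsi zh y / eta)"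
      using eta by (intro mult_left_mono) simp_all
    then have "eta * (gh \<bullet> x') + bregman psi gpsi x' y \<le> eta * (gh \<bullet> zh) + bregman psi gpsi zh y"
      using eta by (simp add: distrib_left)
    moreover have "bregman psi gpsi zh y - bregman psi gpsi x' y - bregman psi gpsi zh x'
        = (gpsi x' - gpsi y) \<bullet> (zh - x')" by (rule three_point_id)
    ultimately have "0 \<le> eta * (gh \<bullet> (zh - x')) + (gpsi x' - gpsi y) \<bullet> (zh - x') + bregman psi gpsi zh x'"
      by (simp add: inner_diff_right algebra_simps)
    moreover have "zh - x' = h *\<^sub>R e" by (simp add: zh_def)
    ultimately have "0 \<le> h * L + (psi (x' + h *\<^sub>R e) - psi x' - h * (gpsi x' \<bullet> e))"
      unfolding L_def bregman_def zh_def by (simp add: algebra_simps inner_commute)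
    then have "- L * h \<le> (psi (x' + h *\<^sub>R e) - psi x') - h * (gpsi x' \<bullet> e)" by (simp add: algebra_simps)
    then have "- L \<le> ((psi (x' + h *\<^sub>R e) - psi x') - h * (gpsi x' \<bullet> e)) / h"
      using h by (simp add: field_simps)
    also have "\<dots> = (psi (x' + h *\<^sub>R e) - psi x') / h - gpsi x' \<bullet> e" using h by (simp add: field_simps)
    finally show ?thesis .
  qed
  have lim: "((\<lambda>h. (psi (x' + h *\<^sub>R e) - psi x') / h - gpsi x' \<bullet> e) \<longlongrightarrow> gpsi x' \<bullet> e - gpsi x' \<bullet> e) (at_right 0)"
    by (intro tendsto_diff quot_lim[OF der] tendsto_const)
  have ev: "eventually (\<lambda>h. (psi (x' + h *\<^sub>R e) - psi x') / h - gpsi x' \<bullet> e \<ge> - L) (at_right (0::real))"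
    by (rule eventually_at_rightI[of 0 1]) (auto intro: lb)
  have "- L \<le> gpsi x' \<bullet> e - gpsi x' \<bullet> e" by (rule tendsto_lowerbound[OF lim ev]) simp
  then have L0: "L \<ge> 0" by simp
  have "bregman psi gpsi z y - bregman psi gpsi x' y - bregman psi gpsi z x' = (gpsi x' - gpsi y) \<bullet> e"
    unfolding e_def by (rule three_point_id)
  then show ?thesis using L0 unfolding L_def e_def by (simp add: inner_diff_right algebra_simps)
qed



lemma min_interior:
  fixes psi :: "real^'d \<Rightarrow> real"
  assumes cD: "convex D" and cv: "convex_on D psi" and X: "convex X" "X \<subseteq> D"
    and w: "w \<in> X" "w \<in> interior D"
    and der: "\<forall>y\<in>interior D. (psi has_derivative (\<lambda>h. gpsi y \<bullet> h)) (at y)"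
    and z0: "z0 \<in> X"
    and mn: "\<forall>z\<in>X. psi z0 + q \<bullet> z0 \<le> psi z + q \<bullet> z"
    and bar: "\<forall>y :: nat \<Rightarrow> real^'d. \<forall>p. (\<forall>k. y k \<in> interior D) \<and> y \<longlonglongrightarrow> p
                    \<and> p \<in> frontier D \<longrightarrow> filterlim (\<lambda>k. norm (gpsi (y k))) at_top sequentially"
  shows "z0 \<in> interior D"
proof (rule ccontr)
  assume nz: "z0 \<notin> interior D"
  define d where "d = w - z0"
  define zl where "zl = (\<lambda>l::real. z0 + l *\<^sub>R d)"
  have z0D: "z0 \<in> D" using z0 X by blast
  have zl_int: "zl l \<in> interior D" if "0 < l" "l \<le> 1" for l
    using mem_interior_convex_shrink[OF cD w(2) z0D that] by (simp add: zl_def d_def algebra_simps)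
  have zl_X: "zl l \<in> X" if "0 < l" "l \<le> 1" for l
  proof -
    have "zl l = (1 - l) *\<^sub>R z0 + l *\<^sub>R w" by (simp add: zl_def d_def algebra_simps)
    then show ?thesis using convexD[OF X(1) z0 w(1), of "1 - l" l] that by simp
  qed
  have wD: "w \<in> D" using w X by blast
  have "isCont psi w" using der w(2) has_derivative_continuous by blast
  then obtain r1 where r1: "r1 > 0" "\<And>u. dist u w < r1 \<Longrightarrow> dist (psi u) (psi w) < 1"
    unfolding continuous_at_eps_delta by (meson zero_less_one)
  obtain r2 where r2: "r2 > 0" "ball w r2 \<subseteq> interior D"
    using w(2) open_interior openE by blast
  define r where "r = min r1 r2"
  have r: "r > 0" using r1 r2 by (simp add: r_def)
  define Bd where "Bd = max 0 (2 * (psi w + 1 - psi z0 + q \<bullet> d) / r)"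
  have bnd: "norm (gpsi (zl l)) \<le> Bd" if l: "0 < l" "l \<le> 1" for l
  proof (cases "gpsi (zl l) = 0")
    case True then show ?thesis by (simp add: Bd_def)
  next
    case False
    define g where "g = gpsi (zl l)"
    have gn: "norm g > 0" using False by (simp add: g_def)
    define v where "v = (r / 2 / norm g) *\<^sub>R g"
    have nv: "norm v = r / 2" using gn r by (simp add: v_def)
    have gv: "g \<bullet> v = r / 2 * norm g" using gn by (simp add: v_def power2_norm_eq_inner[symmetric] power2_eq_square)
    define u where "u = w + v"
    have du: "dist u w < r" using nv r by (simp add: u_def dist_norm)
    then have "u \<in> interior D" using r2 by (auto simp: r_def dist_commute)
    then have uD: "u \<in> D" using interior_subset by blast
    have psiu: "psi u < psi w + 1" using r1(2)[of u] du by (simp add: r_def dist_real_def)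
    have derl: "(psi has_derivative (\<lambda>h. g \<bullet> h)) (at (zl l))" using der zl_int[OF l] by (simp add: g_def)
    have gi: "psi u \<ge> psi (zl l) + g \<bullet> (u - zl l)" by (rule grad_ineq[OF cv zl_int[OF l] derl uD])
    have gi0: "psi z0 \<ge> psi (zl l) + g \<bullet> (z0 - zl l)" by (rule grad_ineq[OF cv zl_int[OF l] derl z0D])
    have mnl: "psi z0 + q \<bullet> z0 \<le> psi (zl l) + q \<bullet> zl l" using mn zl_X[OF l] by blast
    have e1: "z0 - zl l = - l *\<^sub>R d" by (simp add: zl_def)
    have e2: "u - zl l = (1 - l) *\<^sub>R d + v" by (simp add: zl_def u_def d_def algebra_simps)
    have e3: "q \<bullet> zl l = q \<bullet> z0 + l * (q \<bullet> d)" by (simp add: zl_def inner_add_right)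
    from gi0 mnl e1 e3 have A: "l * (g \<bullet> d) \<ge> - l * (q \<bullet> d)" by (simp add: algebra_simps)
    then have "l * (- (q \<bullet> d)) \<le> l * (g \<bullet> d)" by simp
    then have A': "g \<bullet> d \<ge> - (q \<bullet> d)" using l mult_le_cancel_left_pos by blast
    have "(1 - l) * (g \<bullet> d) \<ge> (1 - l) * (- (q \<bullet> d))" using A' l by (intro mult_left_mono) simp_all
    with gi e2 gv psiu mnl e3 have "psi w + 1 > psi z0 - q \<bullet> d + r / 2 * norm g"
      by (simp add: inner_add_right algebra_simps)
    then have "norm g < 2 * (psi w + 1 - psi z0 + q \<bullet> d) / r" using r by (simp add: field_simps)
    then show ?thesis by (simp add: Bd_def g_def)
  qed
  define yk where "yk = (\<lambda>k::nat. zl (1 / Suc k))"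
  have yk_int: "\<forall>k. yk k \<in> interior D"
    using zl_int by (auto simp: yk_def field_simps)
  have "(\<lambda>k. z0 + (1 / real (Suc k)) *\<^sub>R d) \<longlonglongrightarrow> z0 + 0 *\<^sub>R d"
    by (intro tendsto_intros LIMSEQ_Suc[OF lim_1_over_n])
  then have yk_lim: "yk \<longlonglongrightarrow> z0" by (simp add: yk_def zl_def)
  have fr: "z0 \<in> frontier D" using z0D nz closure_subset by (auto simp: frontier_def)
  have "filterlim (\<lambda>k. norm (gpsi (yk k))) at_top sequentially"
    using bar yk_int yk_lim fr by blast
  then have "eventually (\<lambda>k. Bd + 1 \<le> norm (gpsi (yk k))) sequentially"
    by (simp add: filterlim_at_top)
  then obtain k where "Bd + 1 \<le> norm (gpsi (yk k))" by (meson eventually_sequentially order_refl)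
  moreover have "norm (gpsi (yk k)) \<le> Bd" unfolding yk_def by (rule bnd) (auto simp: field_simps)
  ultimately show False by simp
qed



lemma det_bound:
  fixes B h e a eta c D :: "nat \<Rightarrow> real" and T :: nat and \<gamma> Y1 :: real
  assumes T: "T \<ge> 1"
    and h: "\<forall>t\<in>{1..T}. h t \<ge> 0" and etap: "\<forall>t\<in>{1..T}. eta t > 0"
    and B: "\<forall>t\<in>{1..Suc T}. B t \<ge> 0"
    and e: "\<forall>t\<in>{1..T}. e t \<ge> 0" and esum: "(\<Sum>t=1..T. e t) \<le> \<gamma>^2" and g: "\<gamma> > 0"
    and D: "\<And>t. D t = Max (insert \<gamma> ((\<lambda>s. sqrt (B s)) ` {1..t}))"
    and c: "\<And>t. c t = sqrt 2 * D t"
    and step: "\<forall>t\<in>{1..T}. eta t * h t + B (Suc t) - B t \<le> e t + c t * a t"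
    and Y1: "Y1 \<ge> 0" and Z: "\<forall>s\<in>{1..T}. (\<Sum>t=1..s. a t) \<le> Y1"
  shows "(\<Sum>t=1..T. eta t * h t) \<le> 3 * (B 1 + \<gamma>^2 + 2 * Y1^2)"
proof -
  define s2 where "s2 = sqrt (2::real)"
  have s2: "s2 > 0" "s2 * s2 = 2" by (auto simp: s2_def)
  have Dge: "D t \<ge> \<gamma>" for t unfolding D by (rule Max_ge) auto
  have Dpos: "D t > 0" for t using Dge[of t] g by linarith
  have cpos: "c t > 0" for t using Dpos[of t] s2 by (simp add: c s2_def)
  have Dmono: "D j \<le> D t" if "j \<le> t" for j t
    unfolding D using that by (intro Max_mono) auto
  have cmono: "c j \<le> c t" if "j \<le> t" for j t using Dmono[OF that] by (simp add: c)
  have D1: "sqrt (B 1) \<le> D 1" unfolding D by (rule Max_ge) auto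
  define K where "K = (sqrt (B 1) + \<gamma>) / s2 + Y1"
  define beta where "beta = (\<lambda>t. B t / c t)"
  have div_step: "eta t * h t / c t + beta (Suc t) - beta t \<le> e t / c 1 + a t" if t: "t \<in> {1..T}" for t
  proof -
    have "(eta t * h t + B (Suc t) - B t) / c t \<le> (e t + c t * a t) / c t"
      using step t cpos[of t] by (simp add: divide_right_mono)
    moreover have "(eta t * h t + B (Suc t) - B t) / c t = eta t * h t / c t + B (Suc t) / c t - B t / c t"
      by (simp add: add_divide_distrib diff_divide_distrib)
    moreover have "(e t + c t * a t) / c t = e t / c t + a t"
      using cpos[of t] by (simp add: add_divide_distrib)
    ultimately have 1: "eta t * h t / c t + B (Suc t) / c t - B t / c t \<le> e t / c t + a t"
      by simp
    have "B (Suc t) / c (Suc t) \<le> B (Suc t) / c t"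
      using B t cpos[of t] cmono[of t "Suc t"] by (intro divide_left_mono) auto
    moreover have "e t / c t \<le> e t / c 1"
      using e t cpos[of 1] cmono[of 1 t] by (intro divide_left_mono) auto
    ultimately show ?thesis using 1 by (simp add: beta_def)
  qed
  have b1: "beta 1 + \<gamma>^2 / c 1 \<le> (sqrt (B 1) + \<gamma>) / s2"
  proof -
    have B1: "B 1 \<ge> 0" using B T by auto
    have "B 1 = sqrt (B 1) * sqrt (B 1)" using B1 by simp
    also have "\<dots> \<le> sqrt (B 1) * D 1" using D1 B1 by (intro mult_left_mono) auto
    finally have "B 1 / c 1 \<le> sqrt (B 1) * D 1 / c 1" using cpos[of 1] by (simp add: divide_right_mono)
    also have "\<dots> = sqrt (B 1) / s2" using Dpos[of 1] by (simp add: c s2_def)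
    finally have p1: "beta 1 \<le> sqrt (B 1) / s2" by (simp add: beta_def)
    have "\<gamma>^2 \<le> \<gamma> * D 1" using Dge[of 1] g by (simp add: power2_eq_square)
    then have "\<gamma>^2 / c 1 \<le> \<gamma> * D 1 / c 1" using cpos[of 1] by (simp add: divide_right_mono)
    also have "\<dots> = \<gamma> / s2" using Dpos[of 1] by (simp add: c s2_def)
    finally show ?thesis using p1 by (simp add: add_divide_distrib)
  qed
  have partial: "(\<Sum>t=1..s. eta t * h t / c t) + beta (Suc s) \<le> K" if s: "s \<in> {1..T}" for s
  proof -
    have "(\<Sum>t=1..s. eta t * h t / c t + beta (Suc t) - beta t) \<le> (\<Sum>t=1..s. e t / c 1 + a t)"
      using div_step s by (intro sum_mono) auto
    moreover have "(\<Sum>t=1..s. eta t * h t / c t + beta (Suc t) - beta t)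
        = (\<Sum>t=1..s. eta t * h t / c t) + (\<Sum>t=1..s. beta (Suc t) - beta t)"
      by (simp add: sum.distrib[symmetric] algebra_simps)
    moreover have "(\<Sum>t=1..s. beta (Suc t) - beta t) = beta (Suc s) - beta 1"
      using s by (intro sum_Suc_diff) auto
    moreover have "(\<Sum>t=1..s. e t / c 1 + a t) = (\<Sum>t=1..s. e t) / c 1 + (\<Sum>t=1..s. a t)"
      by (simp add: sum.distrib sum_divide_distrib)
    moreover have "(\<Sum>t=1..s. e t) \<le> (\<Sum>t=1..T. e t)"
      using s e by (intro sum_mono2) auto
    moreover have "(\<Sum>t=1..s. e t) / c 1 \<le> \<gamma>^2 / c 1"
      using calculation(5) esum cpos[of 1] by (intro divide_right_mono) auto
    moreover have "(\<Sum>t=1..s. a t) \<le> Y1" using Z s by blast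
    ultimately show ?thesis using b1 unfolding K_def by linarith
  qed
  have terms_nn: "eta t * h t / c t \<ge> 0" if "t \<in> {1..T}" for t
  proof -
    have "h t \<ge> 0" "eta t > 0" using that h etap by auto
    then show ?thesis using cpos[of t] by simp
  qed
  have beta_le: "beta j \<le> K" if j: "j \<in> {1..Suc T}" for j
  proof (cases "j = 1")
    case True
    have "\<gamma>^2 / c 1 \<ge> 0" using cpos[of 1] by simp
    then have "beta 1 \<le> K" using b1 Y1 unfolding K_def by linarith
    then show ?thesis using True by simp
  next
    case False
    then obtain s where s: "j = Suc s" "s \<in> {1..T}" using j by (cases j) auto
    have "(\<Sum>t=1..s. eta t * h t / c t) \<ge> 0" using terms_nn s by (intro sum_nonneg) auto
    then have "beta (Suc s) \<le> K" using partial[OF s(2)] by linarith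
    then show ?thesis using s(1) by simp
  qed
  have s2K: "s2 * K = sqrt (B 1) + \<gamma> + s2 * Y1" using s2 by (simp add: K_def field_simps)
  have sB1: "sqrt (B 1) \<ge> 0" using B T by auto
  have s2K0: "s2 * K \<ge> \<gamma>" using s2K sB1 s2 Y1 by simp
  have Bj: "B j \<le> s2 * K * D j" if j: "j \<in> {1..Suc T}" for j
  proof -
    have "B j = beta j * c j" using cpos[of j] by (simp add: beta_def)
    also have "\<dots> \<le> K * c j" using beta_le[OF j] cpos[of j] by (intro mult_right_mono) auto
    finally show ?thesis by (simp add: c s2_def mult.commute mult.left_commute)
  qed
  have Dle: "D t \<le> s2 * K" if t: "t \<in> {1..T}" for t
  proof -
    have "D t \<in> insert \<gamma> ((\<lambda>s. sqrt (B s)) ` {1..t})" unfolding D by (rule Max_in) auto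
    then show ?thesis
    proof
      assume "D t = \<gamma>" then show ?thesis using s2K0 by simp
    next
      assume "D t \<in> (\<lambda>s. sqrt (B s)) ` {1..t}"
      then obtain j where j: "j \<in> {1..t}" "D t = sqrt (B j)" by auto
      have jT: "j \<in> {1..Suc T}" using j t by auto
      have Bj0: "B j \<ge> 0" using B jT by blast
      have "D t * D t = B j" using j(2) Bj0 by simp
      also have "\<dots> \<le> s2 * K * D j" by (rule Bj[OF jT])
      also have "\<dots> \<le> s2 * K * D t" using Dmono[of j t] j s2K0 g by (intro mult_left_mono) auto
      finally have "D t * D t \<le> s2 * K * D t" .
      then show ?thesis using Dpos[of t] by (simp add: mult_le_cancel_right)
    qed
  qed
  have cle: "c t \<le> 2 * K" if t: "t \<in> {1..T}" for t
  proof -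
    have "c t = s2 * D t" by (simp add: c s2_def)
    also have "\<dots> \<le> s2 * (s2 * K)" using Dle[OF t] s2 by (intro mult_left_mono) auto
    finally show ?thesis using s2 by (simp add: mult.assoc[symmetric])
  qed
  have TT: "T \<in> {1..T}" using T by simp
  have betaT: "beta (Suc T) \<ge> 0" using B cpos[of "Suc T"] by (simp add: beta_def)
  have sumK: "(\<Sum>t=1..T. eta t * h t / c t) \<le> K" using partial[OF TT] betaT by linarith
  have "(\<Sum>t=1..T. eta t * h t) = (\<Sum>t=1..T. c t * (eta t * h t / c t))"
  proof (rule sum.cong)
    fix t show "eta t * h t = c t * (eta t * h t / c t)" using cpos[of t] by simp
  qed simp
  also have "\<dots> \<le> (\<Sum>t=1..T. 2 * K * (eta t * h t / c t))"
    using cle terms_nn by (intro sum_mono mult_right_mono) auto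
  also have "\<dots> = 2 * K * (\<Sum>t=1..T. eta t * h t / c t)" by (simp add: sum_distrib_left)
  also have "\<dots> \<le> 2 * K * K"
  proof -
    have "K \<ge> 0" using s2K0 s2 g by (smt (verit) mult_nonneg_nonneg zero_le_mult_iff)
    then show ?thesis using sumK by (intro mult_left_mono) auto
  qed
  also have "\<dots> \<le> 3 * (B 1 + \<gamma>^2 + 2 * Y1^2)"
  proof -
    define p where "p = sqrt (B 1) / s2"
    define q where "q = \<gamma> / s2"
    have B10: "B 1 \<ge> 0" using B T by auto
    have pp: "p * p = B 1 / 2" using s2 B10 by (simp add: p_def s2_def)
    have qq: "q * q = \<gamma>^2 / 2" using s2 by (simp add: q_def s2_def power2_eq_square)
    have Kd: "K = p + q + Y1" by (simp add: K_def p_def q_def add_divide_distrib)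
    have "2 * K * K \<le> 6 * (p * p + q * q + Y1 * Y1)"
    proof -
      have eq: "6 * (p * p + q * q + Y1 * Y1) - 2 * K * K = 2 * ((p - q)^2 + (q - Y1)^2 + (p - Y1)^2)"
        unfolding Kd power2_eq_square by algebra
      have "(p - q)^2 + (q - Y1)^2 + (p - Y1)^2 \<ge> 0" by simp
      then have "0 \<le> 6 * (p * p + q * q + Y1 * Y1) - 2 * K * K" using eq by simp
      then show ?thesis by simp
    qed
    then show ?thesis using pp qq by (simp add: power2_eq_square)
  qed
  finally show ?thesis .
qed


lemma min_conv:
  fixes psi :: "real^'d \<Rightarrow> real"
  assumes "eta > 0"
    and "gh \<bullet> x' + bregman psi gpsi x' y / eta \<le> gh \<bullet> z + bregman psi gpsi z y / eta"
  shows "psi x' + (eta *\<^sub>R gh - gpsi y) \<bullet> x' \<le> psi z + (eta *\<^sub>R gh - gpsi y) \<bullet> z"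
proof -
  have "eta * (gh \<bullet> x' + bregman psi gpsi x' y / eta) \<le> eta * (gh \<bullet> z + bregman psi gpsi z y / eta)"
    using assms by (intro mult_left_mono) simp_all
  then have "eta * (gh \<bullet> x') + bregman psi gpsi x' y \<le> eta * (gh \<bullet> z) + bregman psi gpsi z y"
    using assms(1) by (simp add: distrib_left)
  then show ?thesis unfolding bregman_def
    by (simp add: inner_diff_left inner_diff_right inner_commute algebra_simps)
qed

lemma amgm: "(a::real) * b \<le> a^2 / 2 + b^2 / 2"
proof -
  have "0 \<le> (a - b)^2" by simp
  then show ?thesis by (simp add: power2_diff)
qed

lemma eta_anti:
  fixes \<eta> :: "nat \<Rightarrow> real"
  assumes "\<forall>t\<ge>1. \<eta> (Suc t) \<le> \<eta> t" "1 \<le> t" "t \<le> T"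
  shows "\<eta> T \<le> \<eta> t"
proof -
  have "\<eta> (t + k) \<le> \<eta> t" for k
  proof (induction k)
    case 0 then show ?case by simp
  next
    case (Suc k)
    have "\<eta> (Suc (t + k)) \<le> \<eta> (t + k)" using assms(1,2) by simp
    then show ?case using Suc by simp
  qed
  from this[of "T - t"] assms(3) show ?thesis by simp
qed

theorem theorem1:
  fixes N :: "real^'d \<Rightarrow> real"
    and X :: "(real^'d) set"
    and f :: "real^'d \<Rightarrow> real"
    and xs :: "real^'d"
    and psi :: "real^'d \<Rightarrow> real" and Dpsi :: "(real^'d) set" and gpsi :: "real^'d \<Rightarrow> real^'d"
    and M :: "'w measure"
    and \<xi> g x :: "nat \<Rightarrow> 'w \<Rightarrow> real^'d"
    and x1 :: "real^'d"
    and \<eta> :: "nat \<Rightarrow> real"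
    and G \<sigma> \<delta> Y1 Y2 :: real
    and T :: nat
  assumes norm: "is_norm N"
    and X: "X \<noteq> {}" "closed X" "convex X"
    and f_conv: "convex_on UNIV f"
    and xs: "xs \<in> X" "\<forall>z\<in>X. f xs \<le> f z"
    \<comment> \<open>Assumption 1 (psi is +infinity outside Dpsi)\<close>
    and psi_closed: "closed {(z, s). z \<in> Dpsi \<and> psi z \<le> s}"
    and psi_conv: "convex Dpsi" "convex_on Dpsi psi"
    and psi_int: "interior Dpsi \<noteq> {}"
    and psi_diff: "\<forall>y\<in>interior Dpsi. (psi has_derivative (\<lambda>h. gpsi y \<bullet> h)) (at y)"
    and psi_sc: "\<forall>u\<in>Dpsi. \<forall>y\<in>Dpsi. \<forall>v\<in>subgrad Dpsi psi y.
                   psi u \<ge> psi y + (u - y) \<bullet> v + 1/2 * (N (u - y))^2"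
    and X_dom: "X \<subseteq> Dpsi"
    and psi_bd: "(\<forall>y :: nat \<Rightarrow> real^'d. \<forall>p. (\<forall>k. y k \<in> interior Dpsi) \<and> y \<longlonglongrightarrow> p
                    \<and> p \<in> frontier Dpsi \<longrightarrow> filterlim (\<lambda>k. norm (gpsi (y k))) at_top sequentially)
                 \<or> X \<subseteq> interior Dpsi"
    \<comment> \<open>Probability space, noise and filtration\<close>
    and M: "prob_space M"
    and xi_meas: "\<forall>t\<ge>1. \<xi> t \<in> borel_measurable M"
    and xi_int: "\<forall>t\<ge>1. \<forall>i. integrable M (\<lambda>\<omega>. \<xi> t \<omega> $ i)"
    and xi_mean: "\<forall>t\<ge>1. \<forall>i. AE \<omega> in M.
                    real_cond_exp M (gen_filt M \<xi> (t - 1)) (\<lambda>\<omega>. \<xi> t \<omega> $ i) \<omega> = 0"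
    \<comment> \<open>SMD iterates\<close>
    and eta_pos: "\<forall>t\<ge>1. \<eta> t > 0"
    and eta_mono: "\<forall>t\<ge>1. \<eta> (Suc t) \<le> \<eta> t"
    and x1: "x1 \<in> X" "x1 \<in> interior Dpsi"
    and x_init: "\<forall>\<omega>\<in>space M. x 1 \<omega> = x1"
    and g_sub: "\<forall>t\<ge>1. \<forall>\<omega>\<in>space M. g t \<omega> \<in> subgrad UNIV f (x t \<omega>)"
    and g_meas: "\<forall>t\<ge>1. g t \<in> borel_measurable (gen_filt M \<xi> (t - 1))"
    and x_step: "\<forall>t\<ge>1. \<forall>\<omega>\<in>space M. x (Suc t) \<omega> \<in> X \<and>
                   (\<forall>z\<in>X. (g t \<omega> - \<xi> t \<omega>) \<bullet> x (Suc t) \<omega>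
                              + bregman psi gpsi (x (Suc t) \<omega>) (x t \<omega>) / \<eta> t
                          \<le> (g t \<omega> - \<xi> t \<omega>) \<bullet> z + bregman psi gpsi z (x t \<omega>) / \<eta> t)"
    \<comment> \<open>Assumption 2\<close>
    and A2: "\<forall>z\<in>X. \<forall>v\<in>subgrad UNIV f z. dual_norm N v \<le> G"
    \<comment> \<open>Assumption 3\<close>
    and xi_sq_int: "\<forall>t\<ge>1. integrable M (\<lambda>\<omega>. (dual_norm N (\<xi> t \<omega>))^2)"
    and A3: "\<forall>t\<ge>1. AE \<omega> in M.
               real_cond_exp M (gen_filt M \<xi> (t - 1)) (\<lambda>\<omega>. (dual_norm N (\<xi> t \<omega>))^2) \<omega> \<le> \<sigma>^2"
    \<comment> \<open>Theorem hypotheses\<close>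
    and T: "T \<ge> 1"
    and \<delta>: "0 < \<delta>" "\<delta> < 1"
    and Y: "Y1 > 0" "Y2 > 0"
    and H1: "\<exists>A\<in>sets M. prob_space.prob M A \<le> \<delta> / 2 \<and>
               {\<omega>\<in>space M. Max ((\<lambda>s. \<Sum>t=1..s. \<eta> t *
                   (\<xi> t \<omega> \<bullet> ((1 / (sqrt 2 * Dseq (sqrt (Y2 + (\<Sum>t=1..T. (\<eta> t)^2 * (G^2 + \<sigma>^2))))
                                                   psi gpsi xs x t \<omega>)) *\<^sub>R (x t \<omega> - xs)))) ` {1..T})
                 > Y1} \<subseteq> A"
    and H2: "\<exists>A\<in>sets M. prob_space.prob M A \<le> \<delta> / 2 \<and>
               {\<omega>\<in>space M. (\<Sum>t=1..T. (\<eta> t)^2 * ((dual_norm N (\<xi> t \<omega>))^2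
                   - real_cond_exp M (gen_filt M \<xi> (t - 1)) (\<lambda>\<omega>. (dual_norm N (\<xi> t \<omega>))^2) \<omega>))
                 > Y2} \<subseteq> A"
  shows "\<exists>E\<in>sets M. prob_space.prob M E \<ge> 1 - \<delta> \<and>
           (\<forall>\<omega>\<in>E. f ((1 / real T) *\<^sub>R (\<Sum>t=1..T. x t \<omega>)) - f xs
              \<le> 3 / (\<eta> T * real T) * (bregman psi gpsi xs x1
                   + (\<Sum>t=1..T. (\<eta> t)^2 * (G^2 + \<sigma>^2)) + 2 * Y1^2 + Y2))"
proof -
  interpret P: prob_space M by (rule M)
  have cD: "convex Dpsi" and cv: "convex_on Dpsi psi" using psi_conv by auto
  have xsD: "xs \<in> Dpsi" using xs X_dom by blast
  have it: "\<forall>\<omega>\<in>space M. x t \<omega> \<in> X \<and> x t \<omega> \<in> interior Dpsi" if "1 \<le> t" for t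
    using that
  proof (induction t rule: dec_induct)
    case base then show ?case using x_init x1 by simp
  next
    case (step n)
    show ?case
    proof
      fix \<omega> assume w: "\<omega> \<in> space M"
      have n1: "n \<ge> 1" using step by simp
      have xX: "x (Suc n) \<omega> \<in> X" using x_step n1 w by blast
      have mn: "\<forall>z\<in>X. psi (x (Suc n) \<omega>) + (\<eta> n *\<^sub>R (g n \<omega> - \<xi> n \<omega>) - gpsi (x n \<omega>)) \<bullet> x (Suc n) \<omega>
                 \<le> psi z + (\<eta> n *\<^sub>R (g n \<omega> - \<xi> n \<omega>) - gpsi (x n \<omega>)) \<bullet> z"
      proof
        fix z assume z: "z \<in> X"
        show "psi (x (Suc n) \<omega>) + (\<eta> n *\<^sub>R (g n \<omega> - \<xi> n \<omega>) - gpsi (x n \<omega>)) \<bullet> x (Suc n) \<omega>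
                 \<le> psi z + (\<eta> n *\<^sub>R (g n \<omega> - \<xi> n \<omega>) - gpsi (x n \<omega>)) \<bullet> z"
          by (rule min_conv[where gpsi=gpsi and y="x n \<omega>"]) (use x_step n1 w eta_pos z in auto)
      qed
      have "x (Suc n) \<omega> \<in> interior Dpsi"
        using psi_bd
      proof
        assume bar: "\<forall>y :: nat \<Rightarrow> real^'d. \<forall>p. (\<forall>k. y k \<in> interior Dpsi) \<and> y \<longlonglongrightarrow> p
                    \<and> p \<in> frontier Dpsi \<longrightarrow> filterlim (\<lambda>k. norm (gpsi (y k))) at_top sequentially"
        show ?thesis by (rule min_interior[OF cD cv X(3) X_dom x1(1) x1(2) psi_diff xX mn bar])
      next
        assume "X \<subseteq> interior Dpsi" then show ?thesis using xX by blast
      qed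
      then show "x (Suc n) \<omega> \<in> X \<and> x (Suc n) \<omega> \<in> interior Dpsi" using xX by simp
    qed
  qed
  have Bsc: "bregman psi gpsi u (x t \<omega>) \<ge> 1/2 * (N (u - x t \<omega>))^2"
    if t: "1 \<le> t" and w: "\<omega> \<in> space M" and u: "u \<in> Dpsi" for t \<omega> u
  proof -
    have yi: "x t \<omega> \<in> interior Dpsi" using it[OF t] w by blast
    then have yD: "x t \<omega> \<in> Dpsi" using interior_subset by blast
    have der: "(psi has_derivative (\<lambda>h. gpsi (x t \<omega>) \<bullet> h)) (at (x t \<omega>))" using psi_diff yi by blast
    have "gpsi (x t \<omega>) \<in> subgrad Dpsi psi (x t \<omega>)"
      unfolding subgrad_def using grad_ineq[OF cv yi der] by blast
    then have "psi u \<ge> psi (x t \<omega>) + (u - x t \<omega>) \<bullet> gpsi (x t \<omega>) + 1/2 * (N (u - x t \<omega>))^2"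
      using psi_sc u yD by blast
    then show ?thesis unfolding bregman_def by simp
  qed
  have step_ineq: "\<eta> t * (f (x t \<omega>) - f xs) + bregman psi gpsi xs (x (Suc t) \<omega>) - bregman psi gpsi xs (x t \<omega>)
      \<le> (\<eta> t)^2 * (G^2 + (dual_norm N (\<xi> t \<omega>))^2) + \<eta> t * (\<xi> t \<omega> \<bullet> (x t \<omega> - xs))"
    if t: "1 \<le> t" and w: "\<omega> \<in> space M" for t \<omega>
  proof -
    define y where "y = x t \<omega>"
    define y' where "y' = x (Suc t) \<omega>"
    define gg where "gg = g t \<omega>"
    define xi where "xi = \<xi> t \<omega>"
    define gh where "gh = gg - xi"
    define et where "et = \<eta> t"
    have et: "et > 0" using eta_pos t by (simp add: et_def)
    have yX: "y \<in> X" using it[OF t] w by (simp add: y_def)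
    have y'X: "y' \<in> X" and y'i: "y' \<in> interior Dpsi" using it[of "Suc t"] t w by (auto simp: y'_def)
    have der': "(psi has_derivative (\<lambda>h. gpsi y' \<bullet> h)) (at y')" using psi_diff y'i by blast
    have mn: "\<forall>z\<in>X. gh \<bullet> y' + bregman psi gpsi y' y / et \<le> gh \<bullet> z + bregman psi gpsi z y / et"
      using x_step t w by (simp add: gh_def gg_def xi_def y_def y'_def et_def)
    have tp: "et * (gh \<bullet> (y' - xs)) \<le> bregman psi gpsi xs y - bregman psi gpsi xs y' - bregman psi gpsi y' y"
      by (rule three_point[OF cv X(3) X_dom y'X der' et mn xs(1)])
    have sub: "f xs \<ge> f y + gg \<bullet> (xs - y)" using g_sub t w by (auto simp: subgrad_def gg_def y_def)
    have ggsub: "gg \<in> subgrad UNIV f y" using g_sub t w by (simp add: gg_def y_def)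
    have gG: "dual_norm N gg \<le> G" using A2 yX ggsub by blast
    have sc: "bregman psi gpsi y' y \<ge> 1/2 * (N (y' - y))^2"
      using Bsc[OF t w, of y'] y'X X_dom by (auto simp: y_def)
    have Nsym: "N (y - y') = N (y' - y)" using normN_basic(3)[OF norm, of "y' - y"] by simp
    have hol: "gh \<bullet> (y - y') \<le> dual_norm N gh * N (y' - y)" using dual_holder(1)[OF norm, of gh "y - y'"] Nsym by simp
    have dgh0: "dual_norm N gh \<ge> 0" by (rule dual_holder(2)[OF norm])
    have dxi0: "dual_norm N xi \<ge> 0" by (rule dual_holder(2)[OF norm])
    have dtri: "dual_norm N gh \<le> G + dual_norm N xi" using dual_tri[OF norm, of gg xi] gG by (simp add: gh_def)
    have sq: "(dual_norm N gh)^2 \<le> 2 * G^2 + 2 * (dual_norm N xi)^2"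
    proof -
      have "(dual_norm N gh)^2 \<le> (G + dual_norm N xi)^2" using dgh0 dtri by (intro power_mono) auto
      also have "\<dots> \<le> 2 * G^2 + 2 * (dual_norm N xi)^2"
      proof -
        have "0 \<le> (G - dual_norm N xi)^2" by simp
        then show ?thesis by (simp add: power2_sum power2_diff)
      qed
      finally show ?thesis .
    qed
    have am: "(et * dual_norm N gh) * N (y' - y) \<le> (et * dual_norm N gh)^2 / 2 + (N (y' - y))^2 / 2"
      by (rule amgm)
    have "et * (gh \<bullet> (y - y')) \<le> et * (dual_norm N gh * N (y' - y))"
      using hol et by (intro mult_left_mono) auto
    also have "\<dots> = (et * dual_norm N gh) * N (y' - y)" by simp
    finally have c1: "et * (gh \<bullet> (y - y')) \<le> et^2 * (dual_norm N gh)^2 / 2 + (N (y' - y))^2 / 2"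
      using am by (simp add: power_mult_distrib)
    have "et^2 * (dual_norm N gh)^2 \<le> et^2 * (2 * G^2 + 2 * (dual_norm N xi)^2)"
      using sq by (intro mult_left_mono) auto
    then have c2: "et * (gh \<bullet> (y - y')) \<le> et^2 * (G^2 + (dual_norm N xi)^2) + bregman psi gpsi y' y"
      using c1 sc by (simp add: algebra_simps)
    have dec: "gg \<bullet> (y - xs) = gh \<bullet> (y - y') + gh \<bullet> (y' - xs) + xi \<bullet> (y - xs)"
      by (simp add: gh_def inner_diff_left inner_diff_right algebra_simps)
    have "et * (f y - f xs) \<le> et * (gg \<bullet> (y - xs))"
    proof -
      have "f y - f xs \<le> gg \<bullet> (y - xs)" using sub by (simp add: inner_diff_right)
      then show ?thesis using et by (intro mult_left_mono) auto
    qed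
    also have "\<dots> = et * (gh \<bullet> (y - y')) + et * (gh \<bullet> (y' - xs)) + et * (xi \<bullet> (y - xs))"
      unfolding dec by (simp add: distrib_left)
    finally have "et * (f y - f xs) \<le> et * (gh \<bullet> (y - y')) + et * (gh \<bullet> (y' - xs)) + et * (xi \<bullet> (y - xs))" .
    then show ?thesis using c2 tp by (simp add: y_def y'_def xi_def et_def)
  qed
  define \<gamma> where "\<gamma> = sqrt (Y2 + (\<Sum>t=1..T. (\<eta> t)^2 * (G^2 + \<sigma>^2)))"
  have sum0: "(\<Sum>t=1..T. (\<eta> t)^2 * (G^2 + \<sigma>^2)) \<ge> 0" by (intro sum_nonneg) auto
  have g2: "\<gamma>^2 = Y2 + (\<Sum>t=1..T. (\<eta> t)^2 * (G^2 + \<sigma>^2))"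
    unfolding \<gamma>_def using sum0 Y by simp
  have gpos: "\<gamma> > 0" unfolding \<gamma>_def using sum0 Y by simp
  obtain A1 where A1: "A1 \<in> sets M" "prob_space.prob M A1 \<le> \<delta> / 2"
    "{\<omega>\<in>space M. Max ((\<lambda>s. \<Sum>t=1..s. \<eta> t *
                   (\<xi> t \<omega> \<bullet> ((1 / (sqrt 2 * Dseq \<gamma> psi gpsi xs x t \<omega>)) *\<^sub>R (x t \<omega> - xs)))) ` {1..T})
                 > Y1} \<subseteq> A1"
    using H1[folded \<gamma>_def] by blast
  obtain A2 where A2: "A2 \<in> sets M" "prob_space.prob M A2 \<le> \<delta> / 2"
    "{\<omega>\<in>space M. (\<Sum>t=1..T. (\<eta> t)^2 * ((dual_norm N (\<xi> t \<omega>))^2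
                   - real_cond_exp M (gen_filt M \<xi> (t - 1)) (\<lambda>\<omega>. (dual_norm N (\<xi> t \<omega>))^2) \<omega>))
                 > Y2} \<subseteq> A2"
    using H2 by blast
  have AEall: "AE \<omega> in M. \<forall>t\<in>{1..T}.
      real_cond_exp M (gen_filt M \<xi> (t - 1)) (\<lambda>\<omega>. (dual_norm N (\<xi> t \<omega>))^2) \<omega> \<le> \<sigma>^2"
    by (rule AE_finite_allI) (use A3 in auto)
  then obtain N0 where N0: "\<And>\<omega>. \<omega> \<in> space M - N0 \<Longrightarrow> \<forall>t\<in>{1..T}.
      real_cond_exp M (gen_filt M \<xi> (t - 1)) (\<lambda>\<omega>. (dual_norm N (\<xi> t \<omega>))^2) \<omega> \<le> \<sigma>^2"
    "N0 \<in> null_sets M" by (rule AE_E3) blast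
  define E where "E = space M - (A1 \<union> A2 \<union> N0)"
  have N0s: "N0 \<in> sets M" using N0(2) by auto
  have N0m: "measure M N0 = 0" using N0(2) by (simp add: measure_eq_0_null_sets)
  have Es: "E \<in> sets M" unfolding E_def using A1(1) A2(1) N0s by auto
  have "measure M (A1 \<union> A2 \<union> N0) \<le> measure M (A1 \<union> A2) + measure M N0"
    using A1(1) A2(1) N0s by (intro measure_Un_le) auto
  also have "\<dots> \<le> measure M A1 + measure M A2 + measure M N0"
    using A1(1) A2(1) measure_Un_le[of A1 M A2] by simp
  finally have "measure M (A1 \<union> A2 \<union> N0) \<le> \<delta>" using A1(2) A2(2) N0m by simp
  then have PE: "prob_space.prob M E \<ge> 1 - \<delta>"
    unfolding E_def using P.prob_compl[of "A1 \<union> A2 \<union> N0"] A1(1) A2(1) N0s by simp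
  show ?thesis
  proof (intro bexI[of _ E] conjI ballI)
    show "E \<in> sets M" by (rule Es)
    show "prob_space.prob M E \<ge> 1 - \<delta>" by (rule PE)
    fix \<omega> assume wE: "\<omega> \<in> E"
    have w: "\<omega> \<in> space M" using wE by (simp add: E_def)
    show "f ((1 / real T) *\<^sub>R (\<Sum>t=1..T. x t \<omega>)) - f xs
              \<le> 3 / (\<eta> T * real T) * (bregman psi gpsi xs x1
                   + (\<Sum>t=1..T. (\<eta> t)^2 * (G^2 + \<sigma>^2)) + 2 * Y1^2 + Y2)"
    proof -
      define B where "B = (\<lambda>t. bregman psi gpsi xs (x t \<omega>))"
      define h where "h = (\<lambda>t. f (x t \<omega>) - f xs)"
      define e where "e = (\<lambda>t. (\<eta> t)^2 * (G^2 + (dual_norm N (\<xi> t \<omega>))^2))"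
      define D where "D = (\<lambda>t. Dseq \<gamma> psi gpsi xs x t \<omega>)"
      define c where "c = (\<lambda>t. sqrt 2 * D t)"
      define a where "a = (\<lambda>t. \<eta> t * (\<xi> t \<omega> \<bullet> ((1 / (sqrt 2 * Dseq \<gamma> psi gpsi xs x t \<omega>)) *\<^sub>R (x t \<omega> - xs))))"
      have notA1: "\<omega> \<notin> A1" and notA2: "\<omega> \<notin> A2" and notN0: "\<omega> \<notin> N0" using wE by (auto simp: E_def)
      have maxle: "Max ((\<lambda>s. \<Sum>t=1..s. a t) ` {1..T}) \<le> Y1"
        using A1(3) notA1 w unfolding a_def by (auto simp: not_less)
      have Z: "\<forall>s\<in>{1..T}. (\<Sum>t=1..s. a t) \<le> Y1"
      proof
        fix s assume "s \<in> {1..T}"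
        then have "(\<Sum>t=1..s. a t) \<le> Max ((\<lambda>s. \<Sum>t=1..s. a t) ` {1..T})" by (intro Max_ge) auto
        then show "(\<Sum>t=1..s. a t) \<le> Y1" using maxle by linarith
      qed
      have s2le: "(\<Sum>t=1..T. (\<eta> t)^2 * ((dual_norm N (\<xi> t \<omega>))^2
                   - real_cond_exp M (gen_filt M \<xi> (t - 1)) (\<lambda>\<omega>. (dual_norm N (\<xi> t \<omega>))^2) \<omega>)) \<le> Y2"
        using A2(3) notA2 w by (auto simp: not_less)
      have ce: "\<forall>t\<in>{1..T}. real_cond_exp M (gen_filt M \<xi> (t - 1)) (\<lambda>\<omega>. (dual_norm N (\<xi> t \<omega>))^2) \<omega> \<le> \<sigma>^2"
        using N0(1)[of \<omega>] w notN0 by blast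
      have esum: "(\<Sum>t=1..T. e t) \<le> \<gamma>^2"
      proof -
        have "(\<Sum>t=1..T. (\<eta> t)^2 * (dual_norm N (\<xi> t \<omega>))^2)
            = (\<Sum>t=1..T. (\<eta> t)^2 * ((dual_norm N (\<xi> t \<omega>))^2
                   - real_cond_exp M (gen_filt M \<xi> (t - 1)) (\<lambda>\<omega>. (dual_norm N (\<xi> t \<omega>))^2) \<omega>))
              + (\<Sum>t=1..T. (\<eta> t)^2 * real_cond_exp M (gen_filt M \<xi> (t - 1)) (\<lambda>\<omega>. (dual_norm N (\<xi> t \<omega>))^2) \<omega>)"
          by (simp add: sum.distrib[symmetric] algebra_simps)
        also have "(\<Sum>t=1..T. (\<eta> t)^2 * real_cond_exp M (gen_filt M \<xi> (t - 1)) (\<lambda>\<omega>. (dual_norm N (\<xi> t \<omega>))^2) \<omega>)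
            \<le> (\<Sum>t=1..T. (\<eta> t)^2 * \<sigma>^2)"
          using ce by (intro sum_mono mult_left_mono) auto
        finally have "(\<Sum>t=1..T. (\<eta> t)^2 * (dual_norm N (\<xi> t \<omega>))^2) \<le> Y2 + (\<Sum>t=1..T. (\<eta> t)^2 * \<sigma>^2)"
          using s2le by linarith
        moreover have "(\<Sum>t=1..T. e t) = (\<Sum>t=1..T. (\<eta> t)^2 * G^2) + (\<Sum>t=1..T. (\<eta> t)^2 * (dual_norm N (\<xi> t \<omega>))^2)"
          by (simp add: e_def sum.distrib[symmetric] algebra_simps)
        moreover have "(\<Sum>t=1..T. (\<eta> t)^2 * (G^2 + \<sigma>^2)) = (\<Sum>t=1..T. (\<eta> t)^2 * G^2) + (\<Sum>t=1..T. (\<eta> t)^2 * \<sigma>^2)"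
          by (simp add: sum.distrib[symmetric] algebra_simps)
        ultimately show ?thesis using g2 by linarith
      qed
      have Dge: "D t \<ge> \<gamma>" for t unfolding D_def Dseq_def by (rule Max_ge) auto
      have stepd: "\<forall>t\<in>{1..T}. \<eta> t * h t + B (Suc t) - B t \<le> e t + c t * a t"
      proof
        fix t assume t: "t \<in> {1..T}"
        have cp: "sqrt 2 * D t \<noteq> 0" using Dge[of t] gpos by auto
        have "c t * a t = \<eta> t * (\<xi> t \<omega> \<bullet> (x t \<omega> - xs))"
        proof -
          have "a t = \<eta> t * ((1 / (sqrt 2 * D t)) * (\<xi> t \<omega> \<bullet> (x t \<omega> - xs)))"
            unfolding a_def D_def by (simp only: inner_scaleR_right)
          then show ?thesis using cp unfolding c_def by simp
        qed
        then show "\<eta> t * h t + B (Suc t) - B t \<le> e t + c t * a t"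
          using step_ineq[of t \<omega>] t w by (simp add: h_def B_def e_def algebra_simps)
      qed
      have hnn: "\<forall>t\<in>{1..T}. h t \<ge> 0" using it xs(2) w by (auto simp: h_def)
      have Bnn: "\<forall>t\<in>{1..Suc T}. B t \<ge> 0"
      proof
        fix t assume "t \<in> {1..Suc T}"
        then have "B t \<ge> 1/2 * (N (xs - x t \<omega>))^2" unfolding B_def using Bsc w xsD by auto
        moreover have "(N (xs - x t \<omega>))^2 \<ge> 0" by simp
        ultimately show "B t \<ge> 0" by linarith
      qed
      have main: "(\<Sum>t=1..T. \<eta> t * h t) \<le> 3 * (B 1 + \<gamma>^2 + 2 * Y1^2)"
      proof (rule det_bound[where D=D and c=c and e=e and a=a])
        show "T \<ge> 1" by (rule T)
        show "\<forall>t\<in>{1..T}. h t \<ge> 0" by (rule hnn)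
        show "\<forall>t\<in>{1..T}. \<eta> t > 0" using eta_pos by auto
        show "\<forall>t\<in>{1..Suc T}. B t \<ge> 0" by (rule Bnn)
        show "\<forall>t\<in>{1..T}. e t \<ge> 0" by (auto simp: e_def)
        show "(\<Sum>t=1..T. e t) \<le> \<gamma>^2" by (rule esum)
        show "\<gamma> > 0" by (rule gpos)
        show "\<And>t. D t = Max (insert \<gamma> ((\<lambda>s. sqrt (B s)) ` {1..t}))" by (simp add: D_def Dseq_def B_def)
        show "\<And>t. c t = sqrt 2 * D t" by (simp add: c_def)
        show "\<forall>t\<in>{1..T}. \<eta> t * h t + B (Suc t) - B t \<le> e t + c t * a t" by (rule stepd)
        show "Y1 \<ge> 0" using Y by simp
        show "\<forall>s\<in>{1..T}. (\<Sum>t=1..s. a t) \<le> Y1" by (rule Z)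
      qed
      have etaT: "\<eta> T > 0" using eta_pos T by simp
      have Tp: "real T > 0" using T by simp
      have jensen: "f ((1 / real T) *\<^sub>R (\<Sum>t=1..T. x t \<omega>)) \<le> (\<Sum>t=1..T. (1 / real T) * f (x t \<omega>))"
      proof -
        have "f (\<Sum>t\<in>{1..T}. (1 / real T) *\<^sub>R x t \<omega>) \<le> (\<Sum>t\<in>{1..T}. (1 / real T) * f (x t \<omega>))"
          by (rule convex_on_sum[OF _ _ f_conv]) (use T in auto)
        then show ?thesis by (simp add: scaleR_sum_right)
      qed
      have "(\<Sum>t=1..T. (1 / real T) * f (x t \<omega>)) - f xs = (1 / real T) * (\<Sum>t=1..T. h t)"
      proof -
        have 1: "(\<Sum>t=1..T. h t) = (\<Sum>t=1..T. f (x t \<omega>)) - real T * f xs" by (simp add: h_def sum_subtractf)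
        have 2: "(\<Sum>t=1..T. (1 / real T) * f (x t \<omega>)) = (1 / real T) * (\<Sum>t=1..T. f (x t \<omega>))"
          by (simp add: sum_distrib_left)
        show ?thesis unfolding 1 2 using Tp by (simp add: field_simps)
      qed
      moreover have "\<eta> T * (\<Sum>t=1..T. h t) \<le> (\<Sum>t=1..T. \<eta> t * h t)"
        unfolding sum_distrib_left
        using hnn eta_anti[OF eta_mono] by (intro sum_mono mult_right_mono) auto
      ultimately have "f ((1 / real T) *\<^sub>R (\<Sum>t=1..T. x t \<omega>)) - f xs
          \<le> (1 / real T) * ((\<Sum>t=1..T. \<eta> t * h t) / \<eta> T)"
        apply -
      proof -
        assume eq: "(\<Sum>t=1..T. (1 / real T) * f (x t \<omega>)) - f xs = (1 / real T) * (\<Sum>t=1..T. h t)"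
          and le: "\<eta> T * (\<Sum>t=1..T. h t) \<le> (\<Sum>t=1..T. \<eta> t * h t)"
        have "(\<Sum>t=1..T. h t) \<le> (\<Sum>t=1..T. \<eta> t * h t) / \<eta> T"
          using le etaT by (simp add: pos_le_divide_eq mult.commute)
        then have "(1 / real T) * (\<Sum>t=1..T. h t) \<le> (1 / real T) * ((\<Sum>t=1..T. \<eta> t * h t) / \<eta> T)"
          using Tp by (intro mult_left_mono) auto
        then show ?thesis using jensen eq by linarith
      qed
      also have "\<dots> \<le> (1 / real T) * (3 * (B 1 + \<gamma>^2 + 2 * Y1^2) / \<eta> T)"
        using main etaT Tp by (intro mult_left_mono divide_right_mono) auto
      also have "\<dots> = 3 / (\<eta> T * real T) * (bregman psi gpsi xs x1
                   + (\<Sum>t=1..T. (\<eta> t)^2 * (G^2 + \<sigma>^2)) + 2 * Y1^2 + Y2)"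
        using x_init w g2 by (simp add: B_def field_simps)
      finally show ?thesis .
    qed
  qed
qed


end
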